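(* Let $\mathcal K$ be a 2-category which admits Eilenberg–Moore constructions for both monads and comonads and in which idempotent 2-cells split. Let $(t,\mu,\eta)$ be a monad and $(c,\delta,\varepsilon)$ a comonad on a 0-cell $k$, and $\psi:tc\Rightarrow ct$ a 2-cell. The following are equivalent: (i) $(t,c,\psi)$ is a weak entwining structure, i.e. $\psi\ast\mu c=c\mu\ast\psi t\ast t\psi$, $\delta t\ast\psi=c\psi\ast\psi c\ast t\delta$, $\psi\ast\eta c=c\varepsilon t\ast c\psi\ast c\eta c\ast\delta$ and $\varepsilon t\ast\psi=\mu\ast t\varepsilon t\ast t\psi\ast t\eta c$; (ii) $\psi$ induces both a weak $\iota$-lifting of the comonad $c$ for the monad $t$ and a weak $\pi$-lifting of the monad $t$ for the comonad $c$; that is, both of the following hold: (A) $c\mu\ast\psi t\ast t\psi=\psi\ast\mu c$, $\delta t\ast\psi=cc\mu\ast c\psi t\ast\psi ct\ast t\delta t\ast t\psi\ast t\eta c$ and $\varepsilon t\ast\psi=\mu\ast t\varepsilon t\ast t\psi\ast t\eta c$ (i.e. $((c,\psi),\delta,\varepsilon)$ is a comonad in $\mathrm{Mnd}^\iota(\mathcal K)$); (B) $\delta t\ast\psi=c\psi\ast\psi c\ast t\delta$, $\psi\ast\mu c=c\varepsilon t\ast c\psi\ast c\mu c\ast\psi tc\ast t\psi c\ast tt\delta$ and $\psi\ast\eta c=c\varepsilon t\ast c\psi\ast c\eta c\ast\delta$ (i.e. $((t,\psi),\mu,\eta)$ is a monad in the vertical opposite of $\mathrm{Mnd}^\iota$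 of the vertically-opposite 2-category $\mathcal K_*$).
   Context: Conventions in a 2-category $\mathcal K$: horizontal composition and whiskering by juxtaposition in the order of functor composition; identity 1-cell of $k$ written $k$, identity 2-cell of $V$ written $V$; vertical composition $\ast$ with $\alpha\ast\beta$ meaning $\beta$ then $\alpha$. Monad $(t,\mu,\eta)$: $\mu:tt\Rightarrow t$, $\eta:k\Rightarrow t$ associative and unital. Comonad $(c,\delta,\varepsilon)$: $\delta:c\Rightarrow cc$, $\varepsilon:c\Rightarrow k$, coassociative and counital. $\mathcal K$ admitting Eilenberg–Moore constructions for monads (resp. comonads) means the inclusion of $\mathcal K$ into the Lack–Street 2-category of monads (resp. of comonads) has a right 2-adjoint; idempotent 2-cells split means every idempotent 2-cell factors as $\iota\ast\pi$ with $\pi\ast\iota$ an identity. $\mathrm{Mnd}^\iota(\mathcal K)$: 0-cells monads; 1-cells $(V,\psi):t\to t'$ with $\psi:t'V\Rightarrow Vt$, $V\mu\ast\psi t\ast t'\psi=\psi\ast\mu'V$; 2-cells $\omega:(V,\psi)\Rightarrow(W,\phi)$ are $\omega:V\Rightarrow W$ with $\omega t\ast\psi=W\mu\ast\phi t\ast t'\omega t\ast t'\psi\ast t'\eta'V$; compositions as in $\mathcal K$, 1-cell composite $(V'V,V'\psi\ast\psi'V)$. *)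

theory Defs
  imports Main
begin

text \<open>Data of a (strict) 2-category: 0-cells of type 'o, 1-cells of type 'a, 2-cells of type 'b.
  comp1 g f is the composite "g f" (g after f), comp2 is horizontal composition of 2-cells
  (same order), vcomp a b is the vertical composite "a * b" (first b, then a).\<close>

record ('o, 'a, 'b) two_cat_data =
  Ob    :: "'o set"
  Arr   :: "'a set"
  src1  :: "'a \<Rightarrow> 'o"
  trg1  :: "'a \<Rightarrow> 'o"
  Cell  :: "'b set"
  cdom  :: "'b \<Rightarrow> 'a"
  ccod  :: "'b \<Rightarrow> 'a"
  id1   :: "'o \<Rightarrow> 'a"
  id2   :: "'a \<Rightarrow> 'b"
  vcomp :: "'b \<Rightarrow> 'b \<Rightarrow> 'b"
  comp1 :: "'a \<Rightarrow> 'a \<Rightarrow> 'a"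
  comp2 :: "'b \<Rightarrow> 'b \<Rightarrow> 'b"

definition two_category :: "('o, 'a, 'b) two_cat_data \<Rightarrow> bool" where
  "two_category K \<longleftrightarrow>
    (\<forall>f\<in>Arr K. src1 K f \<in> Ob K \<and> trg1 K f \<in> Ob K) \<and>
    (\<forall>x\<in>Ob K. id1 K x \<in> Arr K \<and> src1 K (id1 K x) = x \<and> trg1 K (id1 K x) = x) \<and>
    (\<forall>f\<in>Arr K. \<forall>g\<in>Arr K. src1 K g = trg1 K f \<longrightarrow>
        comp1 K g f \<in> Arr K \<and> src1 K (comp1 K g f) = src1 K f \<and> trg1 K (comp1 K g f) = trg1 K g) \<and>
    (\<forall>f\<in>Arr K. comp1 K (id1 K (trg1 K f)) f = f \<and> comp1 K f (id1 K (src1 K f)) = f) \<and>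
    (\<forall>f\<in>Arr K. \<forall>g\<in>Arr K. \<forall>h\<in>Arr K. src1 K g = trg1 K f \<longrightarrow> src1 K h = trg1 K g \<longrightarrow>
        comp1 K h (comp1 K g f) = comp1 K (comp1 K h g) f) \<and>
    (\<forall>a\<in>Cell K. cdom K a \<in> Arr K \<and> ccod K a \<in> Arr K \<and>
        src1 K (cdom K a) = src1 K (ccod K a) \<and> trg1 K (cdom K a) = trg1 K (ccod K a)) \<and>
    (\<forall>f\<in>Arr K. id2 K f \<in> Cell K \<and> cdom K (id2 K f) = f \<and> ccod K (id2 K f) = f) \<and>
    (\<forall>a\<in>Cell K. \<forall>b\<in>Cell K. cdom K a = ccod K b \<longrightarrow>
        vcomp K a b \<in> Cell K \<and> cdom K (vcomp K a b) = cdom K b \<and> ccod K (vcomp K a b) = ccod K a) \<and>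
    (\<forall>a\<in>Cell K. vcomp K (id2 K (ccod K a)) a = a \<and> vcomp K a (id2 K (cdom K a)) = a) \<and>
    (\<forall>a\<in>Cell K. \<forall>b\<in>Cell K. \<forall>c\<in>Cell K. cdom K a = ccod K b \<longrightarrow> cdom K b = ccod K c \<longrightarrow>
        vcomp K a (vcomp K b c) = vcomp K (vcomp K a b) c) \<and>
    (\<forall>a\<in>Cell K. \<forall>b\<in>Cell K. src1 K (cdom K a) = trg1 K (cdom K b) \<longrightarrow>
        comp2 K a b \<in> Cell K \<and> cdom K (comp2 K a b) = comp1 K (cdom K a) (cdom K b) \<and>
        ccod K (comp2 K a b) = comp1 K (ccod K a) (ccod K b)) \<and>
    (\<forall>a\<in>Cell K. comp2 K (id2 K (id1 K (trg1 K (cdom K a)))) a = a \<and>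
        comp2 K a (id2 K (id1 K (src1 K (cdom K a)))) = a) \<and>
    (\<forall>a\<in>Cell K. \<forall>b\<in>Cell K. \<forall>c\<in>Cell K. src1 K (cdom K a) = trg1 K (cdom K b) \<longrightarrow>
        src1 K (cdom K b) = trg1 K (cdom K c) \<longrightarrow>
        comp2 K a (comp2 K b c) = comp2 K (comp2 K a b) c) \<and>
    (\<forall>f\<in>Arr K. \<forall>g\<in>Arr K. src1 K g = trg1 K f \<longrightarrow>
        comp2 K (id2 K g) (id2 K f) = id2 K (comp1 K g f)) \<and>
    (\<forall>a\<in>Cell K. \<forall>b\<in>Cell K. \<forall>c\<in>Cell K. \<forall>d\<in>Cell K.
        cdom K a = ccod K b \<longrightarrow> cdom K c = ccod K d \<longrightarrow> src1 K (cdom K a) = trg1 K (cdom K c) \<longrightarrow>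
        comp2 K (vcomp K a b) (vcomp K c d) = vcomp K (comp2 K a c) (comp2 K b d))"

text \<open>Whiskering: \<open>wl K V a\<close> is "V a", \<open>wr K a V\<close> is "a V".\<close>

definition wl :: "('o, 'a, 'b) two_cat_data \<Rightarrow> 'a \<Rightarrow> 'b \<Rightarrow> 'b" where
  "wl K V a = comp2 K (id2 K V) a"

definition wr :: "('o, 'a, 'b) two_cat_data \<Rightarrow> 'b \<Rightarrow> 'a \<Rightarrow> 'b" where
  "wr K a V = comp2 K a (id2 K V)"

definition monad :: "('o, 'a, 'b) two_cat_data \<Rightarrow> 'o \<Rightarrow> 'a \<Rightarrow> 'b \<Rightarrow> 'b \<Rightarrow> bool" where
  "monad K k t \<mu> \<eta> \<longleftrightarrow>
    k \<in> Ob K \<and> t \<in> Arr K \<and> src1 K t = k \<and> trg1 K t = k \<and>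
    \<mu> \<in> Cell K \<and> cdom K \<mu> = comp1 K t t \<and> ccod K \<mu> = t \<and>
    \<eta> \<in> Cell K \<and> cdom K \<eta> = id1 K k \<and> ccod K \<eta> = t \<and>
    vcomp K \<mu> (wr K \<mu> t) = vcomp K \<mu> (wl K t \<mu>) \<and>
    vcomp K \<mu> (wr K \<eta> t) = id2 K t \<and>
    vcomp K \<mu> (wl K t \<eta>) = id2 K t"

definition comonad :: "('o, 'a, 'b) two_cat_data \<Rightarrow> 'o \<Rightarrow> 'a \<Rightarrow> 'b \<Rightarrow> 'b \<Rightarrow> bool" where
  "comonad K k c \<delta> \<epsilon> \<longleftrightarrow>
    k \<in> Ob K \<and> c \<in> Arr K \<and> src1 K c = k \<and> trg1 K c = k \<and>
    \<delta> \<in> Cell K \<and> cdom K \<delta> = c \<and> ccod K \<delta> = comp1 K c c \<and>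
    \<epsilon> \<in> Cell K \<and> cdom K \<epsilon> = c \<and> ccod K \<epsilon> = id1 K k \<and>
    vcomp K (wr K \<delta> c) \<delta> = vcomp K (wl K c \<delta>) \<delta> \<and>
    vcomp K (wr K \<epsilon> c) \<delta> = id2 K c \<and>
    vcomp K (wl K c \<epsilon>) \<delta> = id2 K c"

text \<open>The inclusion 2-functor K -> Mnd(K) (Street / Lack--Street 2-category of monads: 1-cells
  (V,psi) with psi : t'V => Vt compatible with multiplications and units, 2-cells
  w : V => W with (w t) * psi = phi * (t' w)) has a right 2-adjoint iff for every monad t
  the 2-functor Mnd(incl(-), t) is representable: there is a 0-cell E and a 1-cell
  (u,chi) : incl(E) -> t of Mnd(K) such that composition with it induces an isomorphism of
  hom-categories K(x,E) = Mnd(K)(incl x, t) for each 0-cell x.  A 1-cell incl(x) -> t is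
  a pair (V,psi) with V : x -> k, psi : t V => V, psi * t psi = psi * mu V, psi * eta V = V;
  the composite of (u,chi) with incl(f) = (f, f) is (u f, chi f).\<close>

definition admits_EM_monads :: "('o, 'a, 'b) two_cat_data \<Rightarrow> bool" where
  "admits_EM_monads K \<longleftrightarrow>
    (\<forall>k t \<mu> \<eta>. monad K k t \<mu> \<eta> \<longrightarrow>
      (\<exists>E u \<chi>. E \<in> Ob K \<and> u \<in> Arr K \<and> src1 K u = E \<and> trg1 K u = k \<and>
         \<chi> \<in> Cell K \<and> cdom K \<chi> = comp1 K t u \<and> ccod K \<chi> = u \<and>
         vcomp K \<chi> (wl K t \<chi>) = vcomp K \<chi> (wr K \<mu> u) \<and>
         vcomp K \<chi> (wr K \<eta> u) = id2 K u \<and>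
         (\<forall>x\<in>Ob K.
            (\<forall>V \<psi>. V \<in> Arr K \<and> src1 K V = x \<and> trg1 K V = k \<and>
                \<psi> \<in> Cell K \<and> cdom K \<psi> = comp1 K t V \<and> ccod K \<psi> = V \<and>
                vcomp K \<psi> (wl K t \<psi>) = vcomp K \<psi> (wr K \<mu> V) \<and>
                vcomp K \<psi> (wr K \<eta> V) = id2 K V \<longrightarrow>
              (\<exists>!f. f \<in> Arr K \<and> src1 K f = x \<and> trg1 K f = E \<and>
                    comp1 K u f = V \<and> wr K \<chi> f = \<psi>)) \<and>
            (\<forall>f g \<omega>. f \<in> Arr K \<and> src1 K f = x \<and> trg1 K f = E \<and>
                g \<in> Arr K \<and> src1 K g = x \<and> trg1 K g = E \<and>
                \<omega> \<in> Cell K \<and> cdom K \<omega> = comp1 K u f \<and> ccod K \<omega> = comp1 K u g \<and>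
                vcomp K \<omega> (wr K \<chi> f) = vcomp K (wr K \<chi> g) (wl K t \<omega>) \<longrightarrow>
              (\<exists>!\<alpha>. \<alpha> \<in> Cell K \<and> cdom K \<alpha> = f \<and> ccod K \<alpha> = g \<and> wl K u \<alpha> = \<omega>)))))"

text \<open>Dually for comonads, with Comnd(K) = Mnd(K_*)_* (K_* reverses 2-cells): 1-cells
  (V,psi) : c -> c' with psi : V c => c' V; 1-cells incl(x) -> c are coactions
  psi : V => c V with c psi * psi = delta V * psi and eps V * psi = V; 2-cells
  w : V => W with phi * w = c w * psi.\<close>

definition admits_EM_comonads :: "('o, 'a, 'b) two_cat_data \<Rightarrow> bool" where
  "admits_EM_comonads K \<longleftrightarrow>
    (\<forall>k c \<delta> \<epsilon>. comonad K k c \<delta> \<epsilon> \<longrightarrow>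
      (\<exists>E u \<chi>. E \<in> Ob K \<and> u \<in> Arr K \<and> src1 K u = E \<and> trg1 K u = k \<and>
         \<chi> \<in> Cell K \<and> cdom K \<chi> = u \<and> ccod K \<chi> = comp1 K c u \<and>
         vcomp K (wl K c \<chi>) \<chi> = vcomp K (wr K \<delta> u) \<chi> \<and>
         vcomp K (wr K \<epsilon> u) \<chi> = id2 K u \<and>
         (\<forall>x\<in>Ob K.
            (\<forall>V \<psi>. V \<in> Arr K \<and> src1 K V = x \<and> trg1 K V = k \<and>
                \<psi> \<in> Cell K \<and> cdom K \<psi> = V \<and> ccod K \<psi> = comp1 K c V \<and>
                vcomp K (wl K c \<psi>) \<psi> = vcomp K (wr K \<delta> V) \<psi> \<and>
                vcomp K (wr K \<epsilon> V) \<psi> = id2 K V \<longrightarrow>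
              (\<exists>!f. f \<in> Arr K \<and> src1 K f = x \<and> trg1 K f = E \<and>
                    comp1 K u f = V \<and> wr K \<chi> f = \<psi>)) \<and>
            (\<forall>f g \<omega>. f \<in> Arr K \<and> src1 K f = x \<and> trg1 K f = E \<and>
                g \<in> Arr K \<and> src1 K g = x \<and> trg1 K g = E \<and>
                \<omega> \<in> Cell K \<and> cdom K \<omega> = comp1 K u f \<and> ccod K \<omega> = comp1 K u g \<and>
                vcomp K (wr K \<chi> g) \<omega> = vcomp K (wl K c \<omega>) (wr K \<chi> f) \<longrightarrow>
              (\<exists>!\<alpha>. \<alpha> \<in> Cell K \<and> cdom K \<alpha> = f \<and> ccod K \<alpha> = g \<and> wl K u \<alpha> = \<omega>)))))"

definition idempotent_2cells_split :: "('o, 'a, 'b) two_cat_data \<Rightarrow> bool" where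
  "idempotent_2cells_split K \<longleftrightarrow>
    (\<forall>e\<in>Cell K. cdom K e = ccod K e \<and> vcomp K e e = e \<longrightarrow>
      (\<exists>W \<pi> \<iota>. W \<in> Arr K \<and> src1 K W = src1 K (cdom K e) \<and> trg1 K W = trg1 K (cdom K e) \<and>
         \<pi> \<in> Cell K \<and> cdom K \<pi> = cdom K e \<and> ccod K \<pi> = W \<and>
         \<iota> \<in> Cell K \<and> cdom K \<iota> = W \<and> ccod K \<iota> = cdom K e \<and>
         vcomp K \<iota> \<pi> = e \<and> vcomp K \<pi> \<iota> = id2 K W))"

definition weak_entwining ::
  "('o, 'a, 'b) two_cat_data \<Rightarrow> 'a \<Rightarrow> 'b \<Rightarrow> 'b \<Rightarrow> 'a \<Rightarrow> 'b \<Rightarrow> 'b \<Rightarrow> 'b \<Rightarrow> bool" where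
  "weak_entwining K t \<mu> \<eta> c \<delta> \<epsilon> \<psi> \<longleftrightarrow>
    vcomp K \<psi> (wr K \<mu> c) = vcomp K (wl K c \<mu>) (vcomp K (wr K \<psi> t) (wl K t \<psi>)) \<and>
    vcomp K (wr K \<delta> t) \<psi> = vcomp K (wl K c \<psi>) (vcomp K (wr K \<psi> c) (wl K t \<delta>)) \<and>
    vcomp K \<psi> (wr K \<eta> c) =
      vcomp K (wl K c (wr K \<epsilon> t)) (vcomp K (wl K c \<psi>) (vcomp K (wl K c (wr K \<eta> c)) \<delta>)) \<and>
    vcomp K (wr K \<epsilon> t) \<psi> =
      vcomp K \<mu> (vcomp K (wl K t (wr K \<epsilon> t)) (vcomp K (wl K t \<psi>) (wl K t (wr K \<eta> c))))"

definition weak_iota_lifting_comonad ::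
  "('o, 'a, 'b) two_cat_data \<Rightarrow> 'a \<Rightarrow> 'b \<Rightarrow> 'b \<Rightarrow> 'a \<Rightarrow> 'b \<Rightarrow> 'b \<Rightarrow> 'b \<Rightarrow> bool" where
  "weak_iota_lifting_comonad K t \<mu> \<eta> c \<delta> \<epsilon> \<psi> \<longleftrightarrow>
    vcomp K (wl K c \<mu>) (vcomp K (wr K \<psi> t) (wl K t \<psi>)) = vcomp K \<psi> (wr K \<mu> c) \<and>
    vcomp K (wr K \<delta> t) \<psi> =
      vcomp K (wl K (comp1 K c c) \<mu>) (vcomp K (wl K c (wr K \<psi> t)) (vcomp K (wr K \<psi> (comp1 K c t))
        (vcomp K (wl K t (wr K \<delta> t)) (vcomp K (wl K t \<psi>) (wl K t (wr K \<eta> c)))))) \<and>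
    vcomp K (wr K \<epsilon> t) \<psi> =
      vcomp K \<mu> (vcomp K (wl K t (wr K \<epsilon> t)) (vcomp K (wl K t \<psi>) (wl K t (wr K \<eta> c))))"

definition weak_pi_lifting_monad ::
  "('o, 'a, 'b) two_cat_data \<Rightarrow> 'a \<Rightarrow> 'b \<Rightarrow> 'b \<Rightarrow> 'a \<Rightarrow> 'b \<Rightarrow> 'b \<Rightarrow> 'b \<Rightarrow> bool" where
  "weak_pi_lifting_monad K t \<mu> \<eta> c \<delta> \<epsilon> \<psi> \<longleftrightarrow>
    vcomp K (wr K \<delta> t) \<psi> = vcomp K (wl K c \<psi>) (vcomp K (wr K \<psi> c) (wl K t \<delta>)) \<and>
    vcomp K \<psi> (wr K \<mu> c) =
      vcomp K (wl K c (wr K \<epsilon> t)) (vcomp K (wl K c \<psi>) (vcomp K (wl K c (wr K \<mu> c))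
        (vcomp K (wr K \<psi> (comp1 K t c)) (vcomp K (wl K t (wr K \<psi> c)) (wl K (comp1 K t t) \<delta>))))) \<and>
    vcomp K \<psi> (wr K \<eta> c) =
      vcomp K (wl K c (wr K \<epsilon> t)) (vcomp K (wl K c \<psi>) (vcomp K (wl K c (wr K \<eta> c)) \<delta>))"

end

theory Submission imports Defs begin

locale L = fixes K :: "('o,'a,'b) two_cat_data" and k
  assumes TC: "two_category K" and kob: "k \<in> Ob K"
begin
definition E where "E f \<longleftrightarrow> f \<in> Arr K \<and> src1 K f = k \<and> trg1 K f = k"
definition C where "C a \<longleftrightarrow> a \<in> Cell K \<and> E (cdom K a) \<and> E (ccod K a)"

lemmas TCs = TC[unfolded two_category_def]
lemma A1: "\<forall>x\<in>Ob K. id1 K x \<in> Arr K \<and> src1 K (id1 K x) = x \<and> trg1 K (id1 K x) = x" using TCs by (elim conjE)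
lemma A2: "\<forall>f\<in>Arr K. \<forall>g\<in>Arr K. src1 K g = trg1 K f \<longrightarrow>
        comp1 K g f \<in> Arr K \<and> src1 K (comp1 K g f) = src1 K f \<and> trg1 K (comp1 K g f) = trg1 K g" using TCs by (elim conjE)
lemma A3: "\<forall>f\<in>Arr K. comp1 K (id1 K (trg1 K f)) f = f \<and> comp1 K f (id1 K (src1 K f)) = f" using TCs by (elim conjE)
lemma A4: "\<forall>f\<in>Arr K. \<forall>g\<in>Arr K. \<forall>h\<in>Arr K. src1 K g = trg1 K f \<longrightarrow> src1 K h = trg1 K g \<longrightarrow>
        comp1 K h (comp1 K g f) = comp1 K (comp1 K h g) f" using TCs by (elim conjE)
lemma A6: "\<forall>f\<in>Arr K. id2 K f \<in> Cell K \<and> cdom K (id2 K f) = f \<and> ccod K (id2 K f) = f" using TCs by (elim conjE)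
lemma A7: "\<forall>a\<in>Cell K. \<forall>b\<in>Cell K. cdom K a = ccod K b \<longrightarrow>
        vcomp K a b \<in> Cell K \<and> cdom K (vcomp K a b) = cdom K b \<and> ccod K (vcomp K a b) = ccod K a" using TCs by (elim conjE)
lemma A8: "\<forall>a\<in>Cell K. vcomp K (id2 K (ccod K a)) a = a \<and> vcomp K a (id2 K (cdom K a)) = a" using TCs by (elim conjE)
lemma A9: "\<forall>a\<in>Cell K. \<forall>b\<in>Cell K. \<forall>c\<in>Cell K. cdom K a = ccod K b \<longrightarrow> cdom K b = ccod K c \<longrightarrow>
        vcomp K a (vcomp K b c) = vcomp K (vcomp K a b) c" using TCs by (elim conjE)
lemma A10: "\<forall>a\<in>Cell K. \<forall>b\<in>Cell K. src1 K (cdom K a) = trg1 K (cdom K b) \<longrightarrow>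
        comp2 K a b \<in> Cell K \<and> cdom K (comp2 K a b) = comp1 K (cdom K a) (cdom K b) \<and>
        ccod K (comp2 K a b) = comp1 K (ccod K a) (ccod K b)" using TCs by (elim conjE)
lemma A12: "\<forall>a\<in>Cell K. \<forall>b\<in>Cell K. \<forall>c\<in>Cell K. src1 K (cdom K a) = trg1 K (cdom K b) \<longrightarrow>
        src1 K (cdom K b) = trg1 K (cdom K c) \<longrightarrow>
        comp2 K a (comp2 K b c) = comp2 K (comp2 K a b) c" using TCs by (elim conjE)
lemma A13: "\<forall>f\<in>Arr K. \<forall>g\<in>Arr K. src1 K g = trg1 K f \<longrightarrow>
        comp2 K (id2 K g) (id2 K f) = id2 K (comp1 K g f)" using TCs by (elim conjE)
lemma A14: "\<forall>a\<in>Cell K. \<forall>b\<in>Cell K. \<forall>c\<in>Cell K. \<forall>d\<in>Cell K.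
        cdom K a = ccod K b \<longrightarrow> cdom K c = ccod K d \<longrightarrow> src1 K (cdom K a) = trg1 K (cdom K c) \<longrightarrow>
        comp2 K (vcomp K a b) (vcomp K c d) = vcomp K (comp2 K a c) (comp2 K b d)" using TCs by (elim conjE)

lemma E_id[simp]: "E (id1 K k)" using A1 kob unfolding E_def by auto
lemma E_comp[simp]: "E f \<Longrightarrow> E g \<Longrightarrow> E (comp1 K g f)" using A2 unfolding E_def by auto
lemma comp_idl[simp]: "E f \<Longrightarrow> comp1 K (id1 K k) f = f" using A3 unfolding E_def by auto
lemma comp_idr[simp]: "E f \<Longrightarrow> comp1 K f (id1 K k) = f" using A3 unfolding E_def by auto
lemma comp_assoc[simp]: "E f \<Longrightarrow> E g \<Longrightarrow> E h \<Longrightarrow> comp1 K (comp1 K h g) f = comp1 K h (comp1 K g f)"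
  using A4 unfolding E_def by simp
lemma C_id[simp]: "E f \<Longrightarrow> C (id2 K f)" and cdom_id[simp]: "E f \<Longrightarrow> cdom K (id2 K f) = f"
  and ccod_id[simp]: "E f \<Longrightarrow> ccod K (id2 K f) = f"
  using A6 unfolding E_def C_def by auto
lemma C_v[simp]: "C a \<Longrightarrow> C b \<Longrightarrow> cdom K a = ccod K b \<Longrightarrow> C (vcomp K a b)"
  and cdom_v[simp]: "C a \<Longrightarrow> C b \<Longrightarrow> cdom K a = ccod K b \<Longrightarrow> cdom K (vcomp K a b) = cdom K b"
  and ccod_v[simp]: "C a \<Longrightarrow> C b \<Longrightarrow> cdom K a = ccod K b \<Longrightarrow> ccod K (vcomp K a b) = ccod K a"
  using A7 unfolding C_def by auto
lemma C_c[simp]: "C a \<Longrightarrow> C b \<Longrightarrow> C (comp2 K a b)"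
  and cdom_c[simp]: "C a \<Longrightarrow> C b \<Longrightarrow> cdom K (comp2 K a b) = comp1 K (cdom K a) (cdom K b)"
  and ccod_c[simp]: "C a \<Longrightarrow> C b \<Longrightarrow> ccod K (comp2 K a b) = comp1 K (ccod K a) (ccod K b)"
  using A10 E_comp[of "cdom K b" "cdom K a"] E_comp[of "ccod K b" "ccod K a"] unfolding C_def by (auto simp: E_def)
lemma C_wl[simp]: "E V \<Longrightarrow> C a \<Longrightarrow> C (wl K V a)"
  and cdom_wl[simp]: "E V \<Longrightarrow> C a \<Longrightarrow> cdom K (wl K V a) = comp1 K V (cdom K a)"
  and ccod_wl[simp]: "E V \<Longrightarrow> C a \<Longrightarrow> ccod K (wl K V a) = comp1 K V (ccod K a)"
  unfolding wl_def by simp_all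
lemma C_wr[simp]: "E V \<Longrightarrow> C a \<Longrightarrow> C (wr K a V)"
  and cdom_wr[simp]: "E V \<Longrightarrow> C a \<Longrightarrow> cdom K (wr K a V) = comp1 K (cdom K a) V"
  and ccod_wr[simp]: "E V \<Longrightarrow> C a \<Longrightarrow> ccod K (wr K a V) = comp1 K (ccod K a) V"
  unfolding wr_def by simp_all

lemma vassoc: "C a \<Longrightarrow> C b \<Longrightarrow> C c \<Longrightarrow> cdom K a = ccod K b \<Longrightarrow> cdom K b = ccod K c \<Longrightarrow>
  vcomp K a (vcomp K b c) = vcomp K (vcomp K a b) c"
  using A9 unfolding C_def by simp
lemma vid_l[simp]: "C a \<Longrightarrow> vcomp K (id2 K (ccod K a)) a = a"
  and vid_r[simp]: "C a \<Longrightarrow> vcomp K a (id2 K (cdom K a)) = a"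
  using A8 unfolding C_def by auto
lemma interch: "C a \<Longrightarrow> C b \<Longrightarrow> C c \<Longrightarrow> C d \<Longrightarrow> cdom K a = ccod K b \<Longrightarrow> cdom K c = ccod K d \<Longrightarrow>
  comp2 K (vcomp K a b) (vcomp K c d) = vcomp K (comp2 K a c) (comp2 K b d)"
  using A14 unfolding C_def E_def by simp
lemma c2_id: "E f \<Longrightarrow> E g \<Longrightarrow> comp2 K (id2 K g) (id2 K f) = id2 K (comp1 K g f)"
  using A13 unfolding E_def by simp
lemma c2_assoc: "C a \<Longrightarrow> C b \<Longrightarrow> C c \<Longrightarrow> comp2 K a (comp2 K b c) = comp2 K (comp2 K a b) c"
  using A12 unfolding C_def E_def by simp

lemma wr_v: "E V \<Longrightarrow> C a \<Longrightarrow> C b \<Longrightarrow> cdom K a = ccod K b \<Longrightarrow>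
  wr K (vcomp K a b) V = vcomp K (wr K a V) (wr K b V)"
  proof -
  assume h: "E V" "C a" "C b" "cdom K a = ccod K b"
  have e: "id2 K V = vcomp K (id2 K V) (id2 K V)" using vid_l[of "id2 K V"] h by simp
  show ?thesis unfolding wr_def using h by (subst (1) e, subst interch) auto
qed
lemma wl_v: "E V \<Longrightarrow> C a \<Longrightarrow> C b \<Longrightarrow> cdom K a = ccod K b \<Longrightarrow>
  wl K V (vcomp K a b) = vcomp K (wl K V a) (wl K V b)"
  proof -
  assume h: "E V" "C a" "C b" "cdom K a = ccod K b"
  have e: "id2 K V = vcomp K (id2 K V) (id2 K V)" using vid_l[of "id2 K V"] h by simp
  show ?thesis unfolding wl_def using h by (subst (1) e, subst interch) auto
qed
lemma wr_wr: "E V \<Longrightarrow> E W \<Longrightarrow> C a \<Longrightarrow> wr K (wr K a V) W = wr K a (comp1 K V W)"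
  unfolding wr_def by (simp add: c2_assoc[symmetric] c2_id)
lemma wl_wl: "E V \<Longrightarrow> E W \<Longrightarrow> C a \<Longrightarrow> wl K V (wl K W a) = wl K (comp1 K V W) a"
  unfolding wl_def by (simp add: c2_assoc c2_id)
lemma wl_wr: "E V \<Longrightarrow> E W \<Longrightarrow> C a \<Longrightarrow> wl K V (wr K a W) = wr K (wl K V a) W"
  unfolding wl_def wr_def by (simp add: c2_assoc)
lemma wr_id: "E V \<Longrightarrow> E f \<Longrightarrow> wr K (id2 K f) V = id2 K (comp1 K f V)"
  unfolding wr_def by (simp add: c2_id)
lemma xch: "C a \<Longrightarrow> C b \<Longrightarrow>
  vcomp K (wr K a (ccod K b)) (wl K (cdom K a) b) = vcomp K (wl K (ccod K a) b) (wr K a (cdom K b))"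
proof -
  assume a: "C a" and b: "C b"
  hence ea: "E (cdom K a)" "E (ccod K a)" and eb: "E (cdom K b)" "E (ccod K b)" unfolding C_def by auto
  have "comp2 K a b = comp2 K (vcomp K a (id2 K (cdom K a))) (vcomp K (id2 K (ccod K b)) b)" using a b by simp
  also have "\<dots> = vcomp K (wr K a (ccod K b)) (wl K (cdom K a) b)" unfolding wr_def wl_def
    using a b ea eb by (subst interch) auto
  finally have 1: "comp2 K a b = \<dots>" .
  have "comp2 K a b = comp2 K (vcomp K (id2 K (ccod K a)) a) (vcomp K b (id2 K (cdom K b)))" using a b by simp
  also have "\<dots> = vcomp K (wl K (ccod K a) b) (wr K a (cdom K b))" unfolding wr_def wl_def
    using a b ea eb by (subst interch) auto
  finally show ?thesis using 1 by simp
qed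

abbreviation vc (infixr "\<bullet>" 55) where "a \<bullet> b \<equiv> vcomp K a b"
abbreviation wL (infixr "\<lhd>" 60) where "V \<lhd> a \<equiv> wl K V a"
abbreviation wR (infixl "\<rhd>" 60) where "a \<rhd> V \<equiv> wr K a V"
abbreviation cp (infixr "\<cdot>" 65) where "f \<cdot> g \<equiv> comp1 K f g"

lemma keyA:
  assumes ty: "E t" "E c" "C \<mu>" "cdom K \<mu> = t \<cdot> t" "ccod K \<mu> = t" "C \<eta>" "cdom K \<eta> = id1 K k" "ccod K \<eta> = t"
    "C \<delta>" "cdom K \<delta> = c" "ccod K \<delta> = c \<cdot> c" "C \<psi>" "cdom K \<psi> = t \<cdot> c" "ccod K \<psi> = c \<cdot> t"
  and un: "\<mu> \<bullet> (t \<lhd> \<eta>) = id2 K t"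
  and e1: "\<psi> \<bullet> (\<mu> \<rhd> c) = (c \<lhd> \<mu>) \<bullet> ((\<psi> \<rhd> t) \<bullet> (t \<lhd> \<psi>))"
  and e2: "(\<delta> \<rhd> t) \<bullet> \<psi> = (c \<lhd> \<psi>) \<bullet> ((\<psi> \<rhd> c) \<bullet> (t \<lhd> \<delta>))"
  shows "(\<delta> \<rhd> t) \<bullet> \<psi> = ((c \<cdot> c) \<lhd> \<mu>) \<bullet> ((c \<lhd> (\<psi> \<rhd> t)) \<bullet> ((\<psi> \<rhd> (c \<cdot> t)) \<bullet>
        ((t \<lhd> (\<delta> \<rhd> t)) \<bullet> ((t \<lhd> \<psi>) \<bullet> (t \<lhd> (\<eta> \<rhd> c))))))"
proof -
  let ?Y = "(t \<lhd> \<psi>) \<bullet> (t \<lhd> (\<eta> \<rhd> c))"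
  have s1: "c \<lhd> (\<psi> \<rhd> t) = (c \<lhd> \<psi>) \<rhd> t" using ty by (simp add: wl_wr)
  have s2: "\<psi> \<rhd> (c \<cdot> t) = (\<psi> \<rhd> c) \<rhd> t" using ty by (simp add: wr_wr)
  have s3: "t \<lhd> (\<delta> \<rhd> t) = (t \<lhd> \<delta>) \<rhd> t" using ty by (simp add: wl_wr)
  have s4: "((c \<lhd> \<psi>) \<rhd> t) \<bullet> (((\<psi> \<rhd> c) \<rhd> t) \<bullet> ((t \<lhd> \<delta>) \<rhd> t)) = (\<delta> \<rhd> (t \<cdot> t)) \<bullet> (\<psi> \<rhd> t)"
  proof -
    have "((c \<lhd> \<psi>) \<rhd> t) \<bullet> (((\<psi> \<rhd> c) \<rhd> t) \<bullet> ((t \<lhd> \<delta>) \<rhd> t)) = ((c \<lhd> \<psi>) \<bullet> ((\<psi> \<rhd> c) \<bullet> (t \<lhd> \<delta>))) \<rhd> t"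
      using ty by (simp add: wr_v)
    also have "\<dots> = ((\<delta> \<rhd> t) \<bullet> \<psi>) \<rhd> t" by (simp only: e2)
    also have "\<dots> = (\<delta> \<rhd> (t \<cdot> t)) \<bullet> (\<psi> \<rhd> t)" using ty by (simp add: wr_v wr_wr)
    finally show ?thesis .
  qed
  have s5: "((c \<cdot> c) \<lhd> \<mu>) \<bullet> (\<delta> \<rhd> (t \<cdot> t)) = (\<delta> \<rhd> t) \<bullet> (c \<lhd> \<mu>)"
    using xch[of \<delta> \<mu>] ty by simp
  have s6: "(\<mu> \<rhd> c) \<bullet> (t \<lhd> (\<eta> \<rhd> c)) = id2 K (t \<cdot> c)"
  proof -
    have "(\<mu> \<rhd> c) \<bullet> (t \<lhd> (\<eta> \<rhd> c)) = (\<mu> \<bullet> (t \<lhd> \<eta>)) \<rhd> c" using ty by (simp add: wl_wr wr_v)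
    also have "\<dots> = id2 K (t \<cdot> c)" using ty un by (simp add: wr_id)
    finally show ?thesis .
  qed
  have "((c \<cdot> c) \<lhd> \<mu>) \<bullet> ((c \<lhd> (\<psi> \<rhd> t)) \<bullet> ((\<psi> \<rhd> (c \<cdot> t)) \<bullet> ((t \<lhd> (\<delta> \<rhd> t)) \<bullet> ?Y)))
     = ((c \<cdot> c) \<lhd> \<mu>) \<bullet> (((c \<lhd> \<psi>) \<rhd> t) \<bullet> (((\<psi> \<rhd> c) \<rhd> t) \<bullet> (((t \<lhd> \<delta>) \<rhd> t) \<bullet> ?Y)))"
    by (simp only: s1 s2 s3)
  also have "\<dots> = ((c \<cdot> c) \<lhd> \<mu>) \<bullet> ((((c \<lhd> \<psi>) \<rhd> t) \<bullet> (((\<psi> \<rhd> c) \<rhd> t) \<bullet> ((t \<lhd> \<delta>) \<rhd> t))) \<bullet> ?Y)"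
    using ty by (simp add: vassoc)
  also have "\<dots> = ((c \<cdot> c) \<lhd> \<mu>) \<bullet> (((\<delta> \<rhd> (t \<cdot> t)) \<bullet> (\<psi> \<rhd> t)) \<bullet> ?Y)" by (simp only: s4)
  also have "\<dots> = (((c \<cdot> c) \<lhd> \<mu>) \<bullet> (\<delta> \<rhd> (t \<cdot> t))) \<bullet> ((\<psi> \<rhd> t) \<bullet> ?Y)" using ty by (simp add: vassoc)
  also have "\<dots> = ((\<delta> \<rhd> t) \<bullet> (c \<lhd> \<mu>)) \<bullet> ((\<psi> \<rhd> t) \<bullet> ?Y)" by (simp only: s5)
  also have "\<dots> = (\<delta> \<rhd> t) \<bullet> (((c \<lhd> \<mu>) \<bullet> ((\<psi> \<rhd> t) \<bullet> (t \<lhd> \<psi>))) \<bullet> (t \<lhd> (\<eta> \<rhd> c)))" using ty by (simp add: vassoc)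
  also have "\<dots> = (\<delta> \<rhd> t) \<bullet> ((\<psi> \<bullet> (\<mu> \<rhd> c)) \<bullet> (t \<lhd> (\<eta> \<rhd> c)))" by (simp only: e1)
  also have "\<dots> = (\<delta> \<rhd> t) \<bullet> (\<psi> \<bullet> ((\<mu> \<rhd> c) \<bullet> (t \<lhd> (\<eta> \<rhd> c))))" using ty by (simp add: vassoc)
  also have "\<dots> = (\<delta> \<rhd> t) \<bullet> \<psi>" using ty by (simp only: s6) (metis vid_r)
  finally show ?thesis by simp
qed

lemma keyB:
  assumes ty: "E t" "E c" "C \<mu>" "cdom K \<mu> = t \<cdot> t" "ccod K \<mu> = t" "C \<epsilon>" "cdom K \<epsilon> = c" "ccod K \<epsilon> = id1 K k"
    "C \<delta>" "cdom K \<delta> = c" "ccod K \<delta> = c \<cdot> c" "C \<psi>" "cdom K \<psi> = t \<cdot> c" "ccod K \<psi> = c \<cdot> t"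
  and cu: "(c \<lhd> \<epsilon>) \<bullet> \<delta> = id2 K c"
  and e1: "\<psi> \<bullet> (\<mu> \<rhd> c) = (c \<lhd> \<mu>) \<bullet> ((\<psi> \<rhd> t) \<bullet> (t \<lhd> \<psi>))"
  and e2: "(\<delta> \<rhd> t) \<bullet> \<psi> = (c \<lhd> \<psi>) \<bullet> ((\<psi> \<rhd> c) \<bullet> (t \<lhd> \<delta>))"
  shows "\<psi> \<bullet> (\<mu> \<rhd> c) = (c \<lhd> (\<epsilon> \<rhd> t)) \<bullet> ((c \<lhd> \<psi>) \<bullet> ((c \<lhd> (\<mu> \<rhd> c)) \<bullet>
        ((\<psi> \<rhd> (t \<cdot> c)) \<bullet> ((t \<lhd> (\<psi> \<rhd> c)) \<bullet> ((t \<cdot> t) \<lhd> \<delta>)))))"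
proof -
  let ?D = "(t \<cdot> t) \<lhd> \<delta>"
  let ?L = "c \<lhd> (\<epsilon> \<rhd> t)"
  have s1: "c \<lhd> (\<mu> \<rhd> c) = (c \<lhd> \<mu>) \<rhd> c" using ty by (simp add: wl_wr)
  have s2: "\<psi> \<rhd> (t \<cdot> c) = (\<psi> \<rhd> t) \<rhd> c" using ty by (simp add: wr_wr)
  have s3: "t \<lhd> (\<psi> \<rhd> c) = (t \<lhd> \<psi>) \<rhd> c" using ty by (simp add: wl_wr)
  have s4: "((c \<lhd> \<mu>) \<rhd> c) \<bullet> (((\<psi> \<rhd> t) \<rhd> c) \<bullet> ((t \<lhd> \<psi>) \<rhd> c)) = (\<psi> \<rhd> c) \<bullet> (\<mu> \<rhd> (c \<cdot> c))"
  proof -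
    have "((c \<lhd> \<mu>) \<rhd> c) \<bullet> (((\<psi> \<rhd> t) \<rhd> c) \<bullet> ((t \<lhd> \<psi>) \<rhd> c)) = ((c \<lhd> \<mu>) \<bullet> ((\<psi> \<rhd> t) \<bullet> (t \<lhd> \<psi>))) \<rhd> c"
      using ty by (simp add: wr_v)
    also have "\<dots> = (\<psi> \<bullet> (\<mu> \<rhd> c)) \<rhd> c" by (simp only: e1)
    also have "\<dots> = (\<psi> \<rhd> c) \<bullet> (\<mu> \<rhd> (c \<cdot> c))" using ty by (simp add: wr_v wr_wr)
    finally show ?thesis .
  qed
  have s5: "(\<mu> \<rhd> (c \<cdot> c)) \<bullet> ?D = (t \<lhd> \<delta>) \<bullet> (\<mu> \<rhd> c)"
    using xch[of \<mu> \<delta>] ty by simp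
  have s6: "?L \<bullet> (\<delta> \<rhd> t) = id2 K (c \<cdot> t)"
  proof -
    have "?L \<bullet> (\<delta> \<rhd> t) = ((c \<lhd> \<epsilon>) \<bullet> \<delta>) \<rhd> t" using ty by (simp add: wl_wr wr_v)
    also have "\<dots> = id2 K (c \<cdot> t)" using ty cu by (simp add: wr_id)
    finally show ?thesis .
  qed
  have "?L \<bullet> ((c \<lhd> \<psi>) \<bullet> ((c \<lhd> (\<mu> \<rhd> c)) \<bullet> ((\<psi> \<rhd> (t \<cdot> c)) \<bullet> ((t \<lhd> (\<psi> \<rhd> c)) \<bullet> ?D))))
     = ?L \<bullet> ((c \<lhd> \<psi>) \<bullet> (((c \<lhd> \<mu>) \<rhd> c) \<bullet> (((\<psi> \<rhd> t) \<rhd> c) \<bullet> (((t \<lhd> \<psi>) \<rhd> c) \<bullet> ?D))))"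
    by (simp only: s1 s2 s3)
  also have "\<dots> = ?L \<bullet> ((c \<lhd> \<psi>) \<bullet> ((((c \<lhd> \<mu>) \<rhd> c) \<bullet> (((\<psi> \<rhd> t) \<rhd> c) \<bullet> ((t \<lhd> \<psi>) \<rhd> c))) \<bullet> ?D))"
    using ty by (simp add: vassoc)
  also have "\<dots> = ?L \<bullet> ((c \<lhd> \<psi>) \<bullet> (((\<psi> \<rhd> c) \<bullet> (\<mu> \<rhd> (c \<cdot> c))) \<bullet> ?D))" by (simp only: s4)
  also have "\<dots> = ?L \<bullet> ((c \<lhd> \<psi>) \<bullet> ((\<psi> \<rhd> c) \<bullet> ((\<mu> \<rhd> (c \<cdot> c)) \<bullet> ?D)))" using ty by (simp add: vassoc)
  also have "\<dots> = ?L \<bullet> ((c \<lhd> \<psi>) \<bullet> ((\<psi> \<rhd> c) \<bullet> ((t \<lhd> \<delta>) \<bullet> (\<mu> \<rhd> c))))" by (simp only: s5)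
  also have "\<dots> = (?L \<bullet> ((c \<lhd> \<psi>) \<bullet> ((\<psi> \<rhd> c) \<bullet> (t \<lhd> \<delta>)))) \<bullet> (\<mu> \<rhd> c)" using ty by (simp add: vassoc)
  also have "\<dots> = (?L \<bullet> ((\<delta> \<rhd> t) \<bullet> \<psi>)) \<bullet> (\<mu> \<rhd> c)" by (simp only: e2)
  also have "\<dots> = ((?L \<bullet> (\<delta> \<rhd> t)) \<bullet> \<psi>) \<bullet> (\<mu> \<rhd> c)" using ty by (simp add: vassoc)
  also have "\<dots> = \<psi> \<bullet> (\<mu> \<rhd> c)" using ty by (simp only: s6) (metis vid_l)
  finally show ?thesis by simp
qed
end
theorem proposition5p7:
  fixes K :: "('o, 'a, 'b) two_cat_data"
  assumes "two_category K"
    and "admits_EM_monads K"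
    and "admits_EM_comonads K"
    and "idempotent_2cells_split K"
    and "monad K k t \<mu> \<eta>"
    and "comonad K k c \<delta> \<epsilon>"
    and "\<psi> \<in> Cell K" and "cdom K \<psi> = comp1 K t c" and "ccod K \<psi> = comp1 K c t"
  shows "weak_entwining K t \<mu> \<eta> c \<delta> \<epsilon> \<psi> \<longleftrightarrow>
           (weak_iota_lifting_comonad K t \<mu> \<eta> c \<delta> \<epsilon> \<psi> \<and> weak_pi_lifting_monad K t \<mu> \<eta> c \<delta> \<epsilon> \<psi>)"
proof -
  have kob: "k \<in> Ob K" using assms(5) unfolding monad_def by simp
  interpret L K k using assms(1) kob by unfold_locales
  have Et: "E t" and Ec: "E c" using assms(5,6) unfolding monad_def comonad_def E_def by auto
  have ty: "C \<mu>" "cdom K \<mu> = comp1 K t t" "ccod K \<mu> = t" "C \<eta>" "cdom K \<eta> = id1 K k" "ccod K \<eta> = t"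
    "C \<delta>" "cdom K \<delta> = c" "ccod K \<delta> = comp1 K c c" "C \<epsilon>" "cdom K \<epsilon> = c" "ccod K \<epsilon> = id1 K k"
    "C \<psi>" and un: "vcomp K \<mu> (wl K t \<eta>) = id2 K t" and cu: "vcomp K (wl K c \<epsilon>) \<delta> = id2 K c"
    using assms(5-9) Et Ec unfolding monad_def comonad_def C_def by auto
  show ?thesis
  proof
    assume W: "weak_entwining K t \<mu> \<eta> c \<delta> \<epsilon> \<psi>"
    hence e1: "\<psi> \<bullet> (\<mu> \<rhd> c) = (c \<lhd> \<mu>) \<bullet> ((\<psi> \<rhd> t) \<bullet> (t \<lhd> \<psi>))"
      and e2: "(\<delta> \<rhd> t) \<bullet> \<psi> = (c \<lhd> \<psi>) \<bullet> ((\<psi> \<rhd> c) \<bullet> (t \<lhd> \<delta>))"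
      unfolding weak_entwining_def by auto
    have A: "(\<delta> \<rhd> t) \<bullet> \<psi> = ((c \<cdot> c) \<lhd> \<mu>) \<bullet> ((c \<lhd> (\<psi> \<rhd> t)) \<bullet> ((\<psi> \<rhd> (c \<cdot> t)) \<bullet>
        ((t \<lhd> (\<delta> \<rhd> t)) \<bullet> ((t \<lhd> \<psi>) \<bullet> (t \<lhd> (\<eta> \<rhd> c))))))"
      by (rule keyA[OF Et Ec ty(1-9) ty(13) assms(8,9) un e1 e2])
    have B: "\<psi> \<bullet> (\<mu> \<rhd> c) = (c \<lhd> (\<epsilon> \<rhd> t)) \<bullet> ((c \<lhd> \<psi>) \<bullet> ((c \<lhd> (\<mu> \<rhd> c)) \<bullet>
        ((\<psi> \<rhd> (t \<cdot> c)) \<bullet> ((t \<lhd> (\<psi> \<rhd> c)) \<bullet> ((t \<cdot> t) \<lhd> \<delta>)))))"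
      by (rule keyB[OF Et Ec ty(1-3) ty(10-12) ty(7-9) ty(13) assms(8,9) cu e1 e2])
    show "weak_iota_lifting_comonad K t \<mu> \<eta> c \<delta> \<epsilon> \<psi> \<and> weak_pi_lifting_monad K t \<mu> \<eta> c \<delta> \<epsilon> \<psi>"
      using W A B unfolding weak_entwining_def weak_iota_lifting_comonad_def weak_pi_lifting_monad_def by simp
  next
    assume "weak_iota_lifting_comonad K t \<mu> \<eta> c \<delta> \<epsilon> \<psi> \<and> weak_pi_lifting_monad K t \<mu> \<eta> c \<delta> \<epsilon> \<psi>"
    thus "weak_entwining K t \<mu> \<eta> c \<delta> \<epsilon> \<psi>"
      unfolding weak_entwining_def weak_iota_lifting_comonad_def weak_pi_lifting_monad_def
      by (elim conjE) (intro conjI; (assumption | (rule sym, assumption)))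
  qed
qed

end
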